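(* Let $H\subseteq\binom{[n]}{3}$ be such that $\bigcup_{h\in H}h=[n]$ and every $h\in H$ contains a vertex $v$ with $d_H(v)\ge2$. Then $|H|\ge 2n/5$.
   Context: $d_H(v)=|\{h\in H: v\in h\}|$ denotes the degree of $v$ in $H$. *)

theory Defs
  imports Main
begin

definition degree :: "'a set set \<Rightarrow> 'a \<Rightarrow> nat" where
  "degree H v = card {h \<in> H. v \<in> h}"

end

theory Submission
  imports Defs
begin

lemma dc:
  assumes "finite S" "finite H"
  shows "(\<Sum>v\<in>S. degree H v) = (\<Sum>h\<in>H. card (h \<inter> S))"
proof -
  have "(\<Sum>v\<in>S. degree H v) = (\<Sum>v\<in>S. \<Sum>h\<in>H. if v \<in> h then 1 else (0::nat))"
    unfolding degree_def using assms by (intro sum.cong) (auto simp: sum.If_cases Int_def conj_commute)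
  also have "\<dots> = (\<Sum>h\<in>H. \<Sum>v\<in>S. if v \<in> h then 1 else (0::nat))"
    by (rule sum.swap)
  also have "\<dots> = (\<Sum>h\<in>H. card (h \<inter> S))"
    using assms by (simp add: sum.If_cases Int_commute)
  finally show ?thesis .
qed

theorem lemmaA1:
  fixes n :: nat and H :: "nat set set"
  assumes "\<forall>h\<in>H. h \<subseteq> {1..n} \<and> card h = 3"
    and "\<Union>H = {1..n}"
    and "\<forall>h\<in>H. \<exists>v\<in>h. degree H v \<ge> 2"
  shows "5 * card H \<ge> 2 * n"
proof -
  define D where "D = {1..n::nat}"
  have fD: "finite D" by (simp add: D_def)
  have fH: "finite H"
  proof -
    have "H \<subseteq> Pow D" using assms(1) D_def by auto
    thus ?thesis using fD finite_subset by blast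
  qed
  define L where "L = {v\<in>D. degree H v = 1}"
  have fL: "finite L" using fD L_def by simp
  have LD: "L \<subseteq> D" using L_def by auto
  have deg_pos: "degree H v \<ge> 1" if "v \<in> D" for v
  proof -
    have "v \<in> \<Union>H" using that assms(2) D_def by simp
    then obtain h where "h \<in> H" "v \<in> h" by blast
    hence "{h\<in>H. v \<in> h} \<noteq> {}" by auto
    moreover have "finite {h\<in>H. v \<in> h}" using fH by simp
    ultimately show ?thesis unfolding degree_def
      by (simp add: Suc_le_eq card_gt_0_iff)
  qed
  have s1: "(\<Sum>v\<in>D. degree H v) = 3 * card H"
  proof -
    have "(\<Sum>v\<in>D. degree H v) = (\<Sum>h\<in>H. card (h \<inter> D))" using dc fD fH by blast
    also have "\<dots> = (\<Sum>h\<in>H. 3)"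
      using assms(1) D_def by (intro sum.cong) (auto simp: Int_absorb2)
    finally show ?thesis by simp
  qed
  have s2: "(\<Sum>v\<in>D. degree H v) \<ge> 2 * card D - card L"
  proof -
    have e1: "(\<Sum>v\<in>D. degree H v) = (\<Sum>v\<in>L. degree H v) + (\<Sum>v\<in>D - L. degree H v)"
      using fD LD by (metis sum.subset_diff add.commute)
    have e2: "(\<Sum>v\<in>L. degree H v) = card L" using L_def by simp
    have "(\<Sum>v\<in>D - L. degree H v) \<ge> (\<Sum>v\<in>D - L. 2)"
    proof (intro sum_mono)
      fix v assume v: "v \<in> D - L"
      hence "degree H v \<ge> 1" "degree H v \<noteq> 1" using deg_pos L_def by auto
      thus "2 \<le> degree H v" by linarith
    qed
    hence "(\<Sum>v\<in>D - L. degree H v) \<ge> 2 * card (D - L)" by simp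
    hence "(\<Sum>v\<in>D. degree H v) \<ge> card L + 2 * card (D - L)" using e1 e2 by simp
    moreover have "card (D - L) = card D - card L" using fL LD by (simp add: card_Diff_subset)
    moreover have "card L \<le> card D" using fD LD card_mono by blast
    ultimately show ?thesis by linarith
  qed
  have s3: "card L \<le> 2 * card H"
  proof -
    have "card L = (\<Sum>v\<in>L. degree H v)" using L_def by simp
    also have "\<dots> = (\<Sum>h\<in>H. card (h \<inter> L))" using dc fL fH by blast
    also have "\<dots> \<le> (\<Sum>h\<in>H. 2)"
    proof (rule sum_mono)
      fix h assume h: "h \<in> H"
      then obtain w where w: "w \<in> h" "degree H w \<ge> 2" using assms(3) by blast
      have "h \<inter> L \<subseteq> h - {w}"
      proof
        fix v assume "v \<in> h \<inter> L"
        hence "v \<in> h" "degree H v = 1" using L_def by auto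
        thus "v \<in> h - {w}" using w(2) by auto
      qed
      moreover have "card h = 3" using h assms(1) by blast
      moreover have "finite h" using `card h = 3` by (metis card.infinite zero_neq_numeral)
      ultimately have "card (h \<inter> L) \<le> card (h - {w})" by (intro card_mono) auto
      also have "\<dots> = 2" using w `card h = 3` `finite h` by simp
      finally show "card (h \<inter> L) \<le> 2" .
    qed
    finally show ?thesis by simp
  qed
  have "card D = n" by (simp add: D_def)
  thus ?thesis using s1 s2 s3 by linarith
qed

end
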